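(* Suppose that $q(z)\le0$ for all $z\in[0,\infty)$ and let $\phi\in X_+$. Then for $w=w^\phi$ one has $w'(t)\le0$ for all $t\ge0$, and there exists $w^\infty=w^\infty(\phi)\in[0,\infty)$ with $w(t)\to w^\infty$ as $t\to\infty$. If moreover $$\forall\,\varepsilon>0\;\exists\,\delta>0\ \text{such that}\ j(\varphi,\psi)\le\varepsilon\ \ \forall\,(\varphi,\psi)\in U_+\ \text{with}\ \|\varphi\|_0\le\delta ,$$ then there is a zero solution, which is stable on $X_+$ in the $C$-norm and in the $C^1$-norm.
   Context: Let $h>0$, $R_-<0$, $I=(R_-,\infty)$, $q:I\to\mathbb{R}$, $\mu>0$, $U=C^1([-h,0],\mathbb{R})\times C^1([-h,0],I)$, $j:U\to\mathbb{R}$, $U_+=C^1([-h,0],\mathbb{R}_+^2)$, $\|\cdot\|_0$ the sup-norm; $x_t(s)=x(t+s)$. Consider $w'(t)=q(v(t))w(t)$, $v'(t)=j(w_t,v_t)-\mu v(t)$, $(w,v)_0=(\varphi,\psi)$. Define $F(\varphi,\psi)=(q(\psi(0))\varphi(0),\,j(\varphi,\psi)-\mu\psi(0))$ and $X_+=\{\phi\in C^1([-h,0],\mathbb{R}_+^2):\phi'(0)=F(\phi)\}\neq\emptyset$. Assume: $j$ is $C^1$ on $U$ with each derivative extending to a linear map on $C([-h,0],\mathbb{R}^2)$ depending continuously on $(\phi,\chi)$; for every bounded $B\subset U_+$ there is $L_B$ with $|j(\phi)-j(\chi)|\le L_B\|\phi-\chi\|_0$ on $B$; $j\ge0$ on $U_+$;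 $j(B_1\times B_2)$ is bounded whenever $B_1\times B_2\subset U_+$ with $B_1$ bounded; $q$ is bounded and $C^1$. Solutions from $X_+$ exist globally and remain nonnegative. *)

theory Defs
  imports "HOL-Analysis.Analysis"
begin

text \<open>Functions on [-h,0] are represented as total functions real => real; only
their values on {-h..0} matter.  Pairs in R^2 are normed by the max-norm.\<close>

definition segC1 :: "real \<Rightarrow> (real \<Rightarrow> real) \<Rightarrow> (real \<Rightarrow> real) \<Rightarrow> bool" where
  "segC1 h f f' \<longleftrightarrow> continuous_on {-h..0} f' \<and>
     (\<forall>s\<in>{-h..0}. (f has_real_derivative f' s) (at s within {-h..0}))"

definition sup1 :: "real \<Rightarrow> (real \<Rightarrow> real) \<Rightarrow> real" where
  "sup1 h f = (SUP s\<in>{-h..0}. \<bar>f s\<bar>)"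

definition sup2 :: "real \<Rightarrow> (real \<Rightarrow> real) \<Rightarrow> (real \<Rightarrow> real) \<Rightarrow> real" where
  "sup2 h f g = (SUP s\<in>{-h..0}. max \<bar>f s\<bar> \<bar>g s\<bar>)"

definition Uplus :: "real \<Rightarrow> (real \<Rightarrow> real) \<Rightarrow> (real \<Rightarrow> real) \<Rightarrow> (real \<Rightarrow> real) \<Rightarrow> (real \<Rightarrow> real) \<Rightarrow> bool" where
  "Uplus h \<phi> \<psi> \<phi>' \<psi>' \<longleftrightarrow> segC1 h \<phi> \<phi>' \<and> segC1 h \<psi> \<psi>' \<and>
     (\<forall>s\<in>{-h..0}. 0 \<le> \<phi> s \<and> 0 \<le> \<psi> s)"

definition Xplus :: "real \<Rightarrow> (real \<Rightarrow> real) \<Rightarrow> ((real \<Rightarrow> real) \<Rightarrow> (real \<Rightarrow> real) \<Rightarrow> real) \<Rightarrow> real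
     \<Rightarrow> (real \<Rightarrow> real) \<Rightarrow> (real \<Rightarrow> real) \<Rightarrow> bool" where
  "Xplus h q j \<mu> \<phi> \<psi> \<longleftrightarrow> (\<exists>\<phi>' \<psi>'. Uplus h \<phi> \<psi> \<phi>' \<psi>' \<and>
     \<phi>' 0 = q (\<psi> 0) * \<phi> 0 \<and> \<psi>' 0 = j \<phi> \<psi> - \<mu> * \<psi> 0)"

definition is_sol :: "real \<Rightarrow> real \<Rightarrow> (real \<Rightarrow> real) \<Rightarrow> ((real \<Rightarrow> real) \<Rightarrow> (real \<Rightarrow> real) \<Rightarrow> real) \<Rightarrow> real
     \<Rightarrow> (real \<Rightarrow> real) \<Rightarrow> (real \<Rightarrow> real)
     \<Rightarrow> (real \<Rightarrow> real) \<Rightarrow> (real \<Rightarrow> real) \<Rightarrow> (real \<Rightarrow> real) \<Rightarrow> (real \<Rightarrow> real) \<Rightarrow> bool" where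
  "is_sol h Rm q j \<mu> \<phi> \<psi> w v w' v' \<longleftrightarrow>
     continuous_on {-h..} w' \<and> continuous_on {-h..} v' \<and>
     (\<forall>t\<ge>-h. (w has_real_derivative w' t) (at t within {-h..}) \<and>
              (v has_real_derivative v' t) (at t within {-h..})) \<and>
     (\<forall>s\<in>{-h..0}. w s = \<phi> s \<and> v s = \<psi> s) \<and>
     (\<forall>t\<ge>-h. Rm < v t) \<and>
     (\<forall>t\<ge>0. w' t = q (v t) * w t \<and>
             v' t = j (\<lambda>s. w (t + s)) (\<lambda>s. v (t + s)) - \<mu> * v t)"

end

theory Submission
  imports Defs
begin

lemma sol_deriv_at:
  assumes "is_sol h Rm q j \<mu> \<phi> \<psi> w v w' v'" "-h < t"
  shows "(w has_real_derivative w' t) (at t)" "(v has_real_derivative v' t) (at t)"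
proof -
  have i: "t \<in> interior {-h..}" using assms(2) by simp
  have "at t within {-h..} = at t" by (rule at_within_interior[OF i])
  then show "(w has_real_derivative w' t) (at t)" "(v has_real_derivative v' t) (at t)"
    using assms unfolding is_sol_def by (metis less_imp_le)+
qed

lemma shift_deriv:
  assumes "(f has_real_derivative f' (t+s)) (at (t+s) within {-h..})" "0 \<le> t"
  shows "((\<lambda>s. f (t+s)) has_real_derivative f' (t+s)) (at s within {-h..0})"
proof -
  have g: "((\<lambda>s. t+s) has_real_derivative 1) (at s within {-h..0})"
    by (auto intro!: derivative_eq_intros)
  have sub: "(\<lambda>s. t+s) ` {-h..0} \<subseteq> {-h..}" using assms(2) by auto
  have "(f has_real_derivative f' (t+s)) (at (t+s) within ((\<lambda>s. t+s) ` {-h..0}))"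
    using assms(1) sub by (rule DERIV_subset)
  from DERIV_image_chain[OF this g] show ?thesis by (simp add: o_def)
qed

lemma seg_Uplus:
  assumes "is_sol h Rm q j \<mu> \<phi> \<psi> w v w' v'" "\<forall>t\<ge>-h. 0 \<le> w t \<and> 0 \<le> v t" "0 \<le> t"
  shows "Uplus h (\<lambda>s. w (t+s)) (\<lambda>s. v (t+s)) (\<lambda>s. w' (t+s)) (\<lambda>s. v' (t+s))"
proof -
  have c1: "continuous_on {-h..} w'" "continuous_on {-h..} v'" using assms(1) unfolding is_sol_def by auto
  have sub: "(\<lambda>s. t+s) ` {-h..0} \<subseteq> {-h..}" using assms(3) by auto
  have "continuous_on {-h..0} (\<lambda>s. w' (t+s))"
    by (rule continuous_on_compose2[OF c1(1) _ sub]) (auto intro!: continuous_intros)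
  moreover have "continuous_on {-h..0} (\<lambda>s. v' (t+s))"
    by (rule continuous_on_compose2[OF c1(2) _ sub]) (auto intro!: continuous_intros)
  moreover have "((\<lambda>s. w (t+s)) has_real_derivative w' (t+s)) (at s within {-h..0})"
    "((\<lambda>s. v (t+s)) has_real_derivative v' (t+s)) (at s within {-h..0})" if "s \<in> {-h..0}" for s
    using that assms(1,3) unfolding is_sol_def by (auto intro!: shift_deriv)
  moreover have "0 \<le> w (t+s) \<and> 0 \<le> v (t+s)" if "s \<in> {-h..0}" for s
    using that assms(2,3) by auto
  ultimately show ?thesis unfolding Uplus_def segC1_def by auto
qed

lemma comparison:
  fixes v v' :: "real \<Rightarrow> real"
  assumes d: "\<And>t. 0 \<le> t \<Longrightarrow> (v has_real_derivative v' t) (at t)"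
    and neg: "\<And>t. 0 \<le> t \<Longrightarrow> M < v t \<Longrightarrow> v' t < 0"
    and v0: "v 0 \<le> M" and t: "0 \<le> t"
  shows "v t \<le> M"
proof (rule ccontr)
  assume "\<not> v t \<le> M"
  hence vt: "M < v t" by simp
  hence tpos: "0 < t" using v0 t by (cases "t = 0") auto
  have cont: "continuous_on {0..t} v"
    by (intro continuous_at_imp_continuous_on ballI DERIV_isCont[OF d]) simp
  define S where "S = {0..t} \<inter> v -` {..M}"
  have cS: "closed S" unfolding S_def by (rule continuous_closed_preimage[OF cont]) auto
  have "0 \<in> S" using v0 tpos unfolding S_def by auto
  hence neS: "S \<noteq> {}" by auto
  have bS: "bdd_above S" unfolding S_def by (auto intro: bdd_aboveI[where M=t])
  define t0 where "t0 = Sup S"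
  have t0S: "t0 \<in> S" unfolding t0_def by (rule closed_contains_Sup[OF neS bS cS])
  hence t0: "0 \<le> t0" "t0 \<le> t" "v t0 \<le> M" unfolding S_def by auto
  have lt: "t0 < t" using t0 vt by (cases "t0 = t") auto
  have above: "M < v s" if "t0 < s" "s \<le> t" for s
  proof (rule ccontr)
    assume "\<not> M < v s"
    hence "s \<in> S" using that t0 unfolding S_def by auto
    hence "s \<le> t0" unfolding t0_def using bS by (rule cSup_upper)
    thus False using that by simp
  qed
  have "\<exists>l z. t0 < z \<and> z < t \<and> (v has_real_derivative l) (at z) \<and> v t - v t0 = (t - t0) * l"
    apply (rule MVT[OF lt])
    using cont apply (rule continuous_on_subset) using t0 apply auto[1]
    using d t0 by (meson le_less_trans less_imp_le real_differentiable_def)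
  then obtain l z where z: "t0 < z" "z < t" "(v has_real_derivative l) (at z)" "v t - v t0 = (t - t0) * l"
    by blast
  have "l = v' z" using z(3) d[of z] t0 z(1) DERIV_unique by force
  hence "l < 0" using neg[of z] above[of z] z t0 by auto
  hence "(t - t0) * l < 0" using lt by (simp add: mult_pos_neg)
  thus False using z(4) vt t0 by linarith
qed

lemma cont_le_sup2:
  assumes "continuous_on {-h..0} f" "continuous_on {-h..0} g" "s \<in> {-h..0}"
  shows "\<bar>f s\<bar> \<le> sup2 h f g" "\<bar>g s\<bar> \<le> sup2 h f g"
proof -
  have c: "continuous_on {-h..0} (\<lambda>s. max \<bar>f s\<bar> \<bar>g s\<bar>)"
    using assms by (auto intro!: continuous_intros)
  have "compact ((\<lambda>s. max \<bar>f s\<bar> \<bar>g s\<bar>) ` {-h..0})"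
    by (rule compact_continuous_image[OF c]) simp
  hence b: "bdd_above ((\<lambda>s. max \<bar>f s\<bar> \<bar>g s\<bar>) ` {-h..0})"
    by (simp add: bounded_imp_bdd_above compact_imp_bounded)
  have "max \<bar>f s\<bar> \<bar>g s\<bar> \<le> sup2 h f g"
    unfolding sup2_def using b assms(3) by (rule cSUP_upper2) simp
  thus "\<bar>f s\<bar> \<le> sup2 h f g" "\<bar>g s\<bar> \<le> sup2 h f g" by auto
qed

lemma segC1_cont: "segC1 h f f' \<Longrightarrow> continuous_on {-h..0} f"
  unfolding segC1_def
  by (auto simp: continuous_on_eq_continuous_within intro: DERIV_continuous)

lemma sup2_le:
  assumes "0 \<le> h" "\<And>s. s \<in> {-h..0} \<Longrightarrow> \<bar>f s\<bar> \<le> M \<and> \<bar>g s\<bar> \<le> M"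
  shows "sup2 h f g \<le> M"
  unfolding sup2_def using assms by (intro cSUP_least) auto

lemma sup1_le:
  assumes "0 \<le> h" "\<And>s. s \<in> {-h..0} \<Longrightarrow> \<bar>f s\<bar> \<le> M"
  shows "sup1 h f \<le> M"
  unfolding sup1_def using assms by (intro cSUP_least) auto


theorem lemma10:
  fixes h Rm \<mu> :: real and q :: "real \<Rightarrow> real"
    and j :: "(real \<Rightarrow> real) \<Rightarrow> (real \<Rightarrow> real) \<Rightarrow> real"
  assumes h_pos: "0 < h" and Rm_neg: "Rm < 0" and mu_pos: "0 < \<mu>"
    and j_seg: "\<And>\<phi> \<psi> \<phi>2 \<psi>2. (\<forall>s\<in>{-h..0}. \<phi> s = \<phi>2 s \<and> \<psi> s = \<psi>2 s) \<Longrightarrow> j \<phi> \<psi> = j \<phi>2 \<psi>2"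
    and j_lip: "\<And>M. \<exists>L. \<forall>\<phi> \<psi> \<phi>' \<psi>' \<alpha> \<beta> \<alpha>' \<beta>'.
        Uplus h \<phi> \<psi> \<phi>' \<psi>' \<and> sup2 h \<phi> \<psi> + sup2 h \<phi>' \<psi>' \<le> M \<and>
        Uplus h \<alpha> \<beta> \<alpha>' \<beta>' \<and> sup2 h \<alpha> \<beta> + sup2 h \<alpha>' \<beta>' \<le> M \<longrightarrow>
        \<bar>j \<phi> \<psi> - j \<alpha> \<beta>\<bar> \<le> L * sup2 h (\<lambda>s. \<phi> s - \<alpha> s) (\<lambda>s. \<psi> s - \<beta> s)"
    and j_nonneg: "\<And>\<phi> \<psi> \<phi>' \<psi>'. Uplus h \<phi> \<psi> \<phi>' \<psi>' \<Longrightarrow> 0 \<le> j \<phi> \<psi>"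
    and j_bdd: "\<And>M. \<exists>K. \<forall>\<phi> \<psi> \<phi>' \<psi>'.
        Uplus h \<phi> \<psi> \<phi>' \<psi>' \<and> sup1 h \<phi> + sup1 h \<phi>' \<le> M \<longrightarrow> \<bar>j \<phi> \<psi>\<bar> \<le> K"
    and q_bdd: "\<exists>K. \<forall>z>Rm. \<bar>q z\<bar> \<le> K"
    and q_C1: "\<exists>q'. continuous_on {Rm<..} q' \<and> (\<forall>z>Rm. (q has_real_derivative q' z) (at z))"
    and X_ne: "\<exists>\<phi> \<psi>. Xplus h q j \<mu> \<phi> \<psi>"
    and glob_ex: "\<And>\<phi> \<psi>. Xplus h q j \<mu> \<phi> \<psi> \<Longrightarrow> \<exists>w v w' v'. is_sol h Rm q j \<mu> \<phi> \<psi> w v w' v'"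
    and nonneg: "\<And>\<phi> \<psi> w v w' v'. Xplus h q j \<mu> \<phi> \<psi> \<Longrightarrow> is_sol h Rm q j \<mu> \<phi> \<psi> w v w' v' \<Longrightarrow>
        \<forall>t\<ge>-h. 0 \<le> w t \<and> 0 \<le> v t"
    and q_nonpos: "\<And>z. 0 \<le> z \<Longrightarrow> q z \<le> 0"
  shows "(\<forall>\<phi> \<psi> w v w' v'. Xplus h q j \<mu> \<phi> \<psi> \<and> is_sol h Rm q j \<mu> \<phi> \<psi> w v w' v' \<longrightarrow>
            (\<forall>t\<ge>0. w' t \<le> 0) \<and> (\<exists>winf\<ge>0. (w \<longlongrightarrow> winf) at_top))
       \<and> ((\<forall>\<epsilon>>0. \<exists>\<delta>>0. \<forall>\<phi> \<psi> \<phi>' \<psi>'. Uplus h \<phi> \<psi> \<phi>' \<psi>' \<and> sup1 h \<phi> \<le> \<delta> \<longrightarrow> j \<phi> \<psi> \<le> \<epsilon>)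
          \<longrightarrow>
          (Xplus h q j \<mu> (\<lambda>_. 0) (\<lambda>_. 0) \<and>
           is_sol h Rm q j \<mu> (\<lambda>_. 0) (\<lambda>_. 0) (\<lambda>_. 0) (\<lambda>_. 0) (\<lambda>_. 0) (\<lambda>_. 0)) \<and>
          (\<forall>\<epsilon>>0. \<exists>\<delta>>0. \<forall>\<phi> \<psi> w v w' v'.
              Xplus h q j \<mu> \<phi> \<psi> \<and> is_sol h Rm q j \<mu> \<phi> \<psi> w v w' v' \<and> sup2 h \<phi> \<psi> < \<delta> \<longrightarrow>
              (\<forall>t\<ge>0. sup2 h (\<lambda>s. w (t + s)) (\<lambda>s. v (t + s)) < \<epsilon>)) \<and>
          (\<forall>\<epsilon>>0. \<exists>\<delta>>0. \<forall>\<phi> \<psi> w v w' v'.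
              Xplus h q j \<mu> \<phi> \<psi> \<and> is_sol h Rm q j \<mu> \<phi> \<psi> w v w' v' \<and>
              sup2 h w v + sup2 h w' v' < \<delta> \<longrightarrow>
              (\<forall>t\<ge>0. sup2 h (\<lambda>s. w (t + s)) (\<lambda>s. v (t + s))
                     + sup2 h (\<lambda>s. w' (t + s)) (\<lambda>s. v' (t + s)) < \<epsilon>)))"
proof -
  have h0: "0 \<le> h" using h_pos by simp
  have Wmono: "w b \<le> w a"
    if X: "Xplus h q j \<mu> \<phi> \<psi>" and S: "is_sol h Rm q j \<mu> \<phi> \<psi> w v w' v'" and ab: "0 \<le> a" "a \<le> b"
    for \<phi> \<psi> w v w' v' a b
  proof -
    have nn: "\<forall>t\<ge>-h. 0 \<le> w t \<and> 0 \<le> v t" using nonneg[OF X S] .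
    show ?thesis
    proof (rule DERIV_nonpos_imp_nonincreasing[OF ab(2)])
      fix x assume x: "a \<le> x" "x \<le> b"
      have "-h < x" using x ab h_pos by linarith
      hence "(w has_real_derivative w' x) (at x)" by (rule sol_deriv_at(1)[OF S])
      moreover have "w' x = q (v x) * w x" using S x ab unfolding is_sol_def by auto
      moreover have "q (v x) \<le> 0" using q_nonpos nn x ab h_pos by auto
      moreover have "0 \<le> w x" using nn x ab h_pos by auto
      ultimately show "\<exists>y. (w has_real_derivative y) (at x) \<and> y \<le> 0"
        by (metis mult_nonpos_nonneg)
    qed
  qed
  have P1: "(\<forall>\<phi> \<psi> w v w' v'. Xplus h q j \<mu> \<phi> \<psi> \<and> is_sol h Rm q j \<mu> \<phi> \<psi> w v w' v' \<longrightarrow>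
            (\<forall>t\<ge>0. w' t \<le> 0) \<and> (\<exists>winf\<ge>0. (w \<longlongrightarrow> winf) at_top))"
  proof (intro allI impI)
    fix \<phi> \<psi> w v w' v'
    assume A: "Xplus h q j \<mu> \<phi> \<psi> \<and> is_sol h Rm q j \<mu> \<phi> \<psi> w v w' v'"
    hence X: "Xplus h q j \<mu> \<phi> \<psi>" and S: "is_sol h Rm q j \<mu> \<phi> \<psi> w v w' v'" by auto
    have nn: "\<forall>t\<ge>-h. 0 \<le> w t \<and> 0 \<le> v t" using nonneg[OF X S] .
    have G1: "\<forall>t\<ge>0. w' t \<le> 0"
    proof (intro allI impI)
      fix t :: real assume t: "0 \<le> t"
      have "w' t = q (v t) * w t" using S t unfolding is_sol_def by auto
      moreover have "q (v t) \<le> 0" using q_nonpos nn t h_pos by auto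
      moreover have "0 \<le> w t" using nn t h_pos by auto
      ultimately show "w' t \<le> 0" by (metis mult_nonpos_nonneg)
    qed
    define winf where "winf = Inf (w ` {0..})"
    have ne: "w ` {0..} \<noteq> {}" by auto
    have bb: "bdd_below (w ` {0..})" using nn h_pos by (intro bdd_belowI[where m=0]) auto
    have low: "winf \<le> w t" if "0 \<le> t" for t
      unfolding winf_def using bb that by (intro cInf_lower) auto
    have "0 \<le> winf" unfolding winf_def using ne nn h_pos by (intro cInf_greatest) auto
    moreover have "(w \<longlongrightarrow> winf) at_top"
    proof (rule order_tendstoI)
      fix a assume "a < winf"
      thus "\<forall>\<^sub>F x in at_top. a < w x"
        using low by (intro eventually_at_top_linorderI[where c=0]) (meson less_le_trans)
    next
      fix a assume "winf < a"
      then obtain y where y: "y \<in> w ` {0..}" "y < a" using cInf_lessD[OF ne] unfolding winf_def by blast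
      then obtain t0 where t0: "0 \<le> t0" "w t0 < a" by auto
      show "\<forall>\<^sub>F x in at_top. w x < a"
        using t0 Wmono[OF X S] by (intro eventually_at_top_linorderI[where c=t0]) (meson le_less_trans)
    qed
    ultimately have "\<exists>winf\<ge>0. (w \<longlongrightarrow> winf) at_top" by blast
    thus "(\<forall>t\<ge>0. w' t \<le> 0) \<and> (\<exists>winf\<ge>0. (w \<longlongrightarrow> winf) at_top)" using G1 by blast
  qed
  have P2: "((\<forall>\<epsilon>>0. \<exists>\<delta>>0. \<forall>\<phi> \<psi> \<phi>' \<psi>'. Uplus h \<phi> \<psi> \<phi>' \<psi>' \<and> sup1 h \<phi> \<le> \<delta> \<longrightarrow> j \<phi> \<psi> \<le> \<epsilon>)
          \<longrightarrow>
          (Xplus h q j \<mu> (\<lambda>_. 0) (\<lambda>_. 0) \<and>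
           is_sol h Rm q j \<mu> (\<lambda>_. 0) (\<lambda>_. 0) (\<lambda>_. 0) (\<lambda>_. 0) (\<lambda>_. 0) (\<lambda>_. 0)) \<and>
          (\<forall>\<epsilon>>0. \<exists>\<delta>>0. \<forall>\<phi> \<psi> w v w' v'.
              Xplus h q j \<mu> \<phi> \<psi> \<and> is_sol h Rm q j \<mu> \<phi> \<psi> w v w' v' \<and> sup2 h \<phi> \<psi> < \<delta> \<longrightarrow>
              (\<forall>t\<ge>0. sup2 h (\<lambda>s. w (t + s)) (\<lambda>s. v (t + s)) < \<epsilon>)) \<and>
          (\<forall>\<epsilon>>0. \<exists>\<delta>>0. \<forall>\<phi> \<psi> w v w' v'.
              Xplus h q j \<mu> \<phi> \<psi> \<and> is_sol h Rm q j \<mu> \<phi> \<psi> w v w' v' \<and>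
              sup2 h w v + sup2 h w' v' < \<delta> \<longrightarrow>
              (\<forall>t\<ge>0. sup2 h (\<lambda>s. w (t + s)) (\<lambda>s. v (t + s))
                     + sup2 h (\<lambda>s. w' (t + s)) (\<lambda>s. v' (t + s)) < \<epsilon>)))" (is "_ \<longrightarrow> ?R")
  proof (intro impI)
    assume small: "\<forall>\<epsilon>>0. \<exists>\<delta>>0. \<forall>\<phi> \<psi> \<phi>' \<psi>'. Uplus h \<phi> \<psi> \<phi>' \<psi>' \<and> sup1 h \<phi> \<le> \<delta> \<longrightarrow> j \<phi> \<psi> \<le> \<epsilon>"
    have U0: "Uplus h (\<lambda>_. 0) (\<lambda>_. 0) (\<lambda>_. 0) (\<lambda>_. 0)"
      unfolding Uplus_def segC1_def by (auto intro!: derivative_eq_intros)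
    have j0le: "j (\<lambda>_. 0) (\<lambda>_. 0) \<le> e" if epos: "0 < e" for e
    proof -
      obtain d where d: "d > 0" "\<forall>\<phi> \<psi> \<phi>' \<psi>'. Uplus h \<phi> \<psi> \<phi>' \<psi>' \<and> sup1 h \<phi> \<le> d \<longrightarrow> j \<phi> \<psi> \<le> e"
        using small epos by blast
      have "sup1 h (\<lambda>_. 0) \<le> d" using d(1) by (intro sup1_le[OF h0]) auto
      thus ?thesis using d U0 by blast
    qed
    have j00: "j (\<lambda>_. 0) (\<lambda>_. 0) = 0"
    proof -
      have "0 \<le> j (\<lambda>_. 0) (\<lambda>_. 0)" using j_nonneg[OF U0] .
      moreover have "\<not> j (\<lambda>_. 0) (\<lambda>_. 0) > 0"
      proof
        assume "j (\<lambda>_. 0) (\<lambda>_. 0) > 0"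
        thus False using j0le[of "j (\<lambda>_. 0) (\<lambda>_. 0) / 2"] by simp
      qed
      ultimately show ?thesis by simp
    qed
    have Z: "Xplus h q j \<mu> (\<lambda>_. 0) (\<lambda>_. 0) \<and>
           is_sol h Rm q j \<mu> (\<lambda>_. 0) (\<lambda>_. 0) (\<lambda>_. 0) (\<lambda>_. 0) (\<lambda>_. 0) (\<lambda>_. 0)"
      unfolding Xplus_def is_sol_def using U0 j00 Rm_neg by (auto intro!: derivative_eq_intros)
    have Key: "\<exists>\<delta>>0. \<delta> \<le> \<eta> \<and> (\<forall>\<phi> \<psi> w v w' v'. Xplus h q j \<mu> \<phi> \<psi> \<and> is_sol h Rm q j \<mu> \<phi> \<psi> w v w' v' \<and>
        (\<forall>s\<in>{-h..0}. \<phi> s < \<delta> \<and> \<psi> s < \<delta>) \<longrightarrow>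
        (\<forall>\<tau>\<ge>-h. 0 \<le> w \<tau> \<and> w \<tau> \<le> \<eta> \<and> 0 \<le> v \<tau> \<and> v \<tau> \<le> \<eta>) \<and>
        (\<forall>t\<ge>0. sup1 h (\<lambda>s. w (t+s)) \<le> \<delta>))" if eta: "0 < \<eta>" for \<eta>
    proof -
      have "0 < \<mu> * \<eta> / 2" using eta mu_pos by simp
      then obtain dj where dj: "dj > 0" "\<forall>\<phi> \<psi> \<phi>' \<psi>'. Uplus h \<phi> \<psi> \<phi>' \<psi>' \<and> sup1 h \<phi> \<le> dj \<longrightarrow> j \<phi> \<psi> \<le> \<mu> * \<eta> / 2"
        using small by blast
      define d where "d = min \<eta> dj"
      have d: "0 < d" "d \<le> \<eta>" "d \<le> dj" unfolding d_def using dj eta by auto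
      show ?thesis
      proof (rule exI[of _ d], intro conjI d allI, rule impI)
        fix \<phi> \<psi> w v w' v'
        assume A: "Xplus h q j \<mu> \<phi> \<psi> \<and> is_sol h Rm q j \<mu> \<phi> \<psi> w v w' v' \<and> (\<forall>s\<in>{-h..0}. \<phi> s < d \<and> \<psi> s < d)"
        hence X: "Xplus h q j \<mu> \<phi> \<psi>" and S: "is_sol h Rm q j \<mu> \<phi> \<psi> w v w' v'"
          and B: "\<forall>s\<in>{-h..0}. \<phi> s < d \<and> \<psi> s < d" by auto
        have nn: "\<forall>t\<ge>-h. 0 \<le> w t \<and> 0 \<le> v t" using nonneg[OF X S] .
        have init: "\<forall>s\<in>{-h..0}. w s = \<phi> s \<and> v s = \<psi> s" using S unfolding is_sol_def by auto
        have wlt: "w \<tau> < d" if "-h \<le> \<tau>" for \<tau>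
        proof (cases "\<tau> \<le> 0")
          case True thus ?thesis using init B that by auto
        next
          case False
          hence "w \<tau> \<le> w 0" using Wmono[OF X S, of 0 \<tau>] by simp
          moreover have "w 0 < d" using init B h0 by auto
          ultimately show ?thesis by simp
        qed
        have sw: "sup1 h (\<lambda>s. w (t+s)) \<le> d" if "0 \<le> t" for t
          using that nn wlt by (intro sup1_le[OF h0]) (auto intro: less_imp_le)
        have vle: "v t \<le> \<eta>" if "0 \<le> t" for t
        proof (rule comparison[of v v' \<eta> t])
          fix t :: real assume "0 \<le> t"
          thus "(v has_real_derivative v' t) (at t)" using h_pos by (intro sol_deriv_at(2)[OF S]) simp
        next
          fix t :: real assume t: "0 \<le> t" "\<eta> < v t"
          have U: "Uplus h (\<lambda>s. w (t+s)) (\<lambda>s. v (t+s)) (\<lambda>s. w' (t+s)) (\<lambda>s. v' (t+s))"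
            using seg_Uplus[OF S nn t(1)] .
          have "sup1 h (\<lambda>s. w (t+s)) \<le> dj" using sw[OF t(1)] d by linarith
          hence "j (\<lambda>s. w (t+s)) (\<lambda>s. v (t+s)) \<le> \<mu> * \<eta> / 2"
            using dj(2) U by blast
          moreover have "v' t = j (\<lambda>s. w (t+s)) (\<lambda>s. v (t+s)) - \<mu> * v t"
            using S t unfolding is_sol_def by auto
          moreover have "\<mu> * \<eta> < \<mu> * v t" using t mu_pos by simp
          moreover have "0 < \<mu> * \<eta>" using mu_pos eta by simp
          ultimately show "v' t < 0" by linarith
        next
          have z0: "(0::real) \<in> {-h..0}" using h0 by simp
          have "v 0 = \<psi> 0" "\<psi> 0 < d" using init B z0 by auto
          thus "v 0 \<le> \<eta>" using d by linarith
        qed (rule that)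
        have G1: "\<forall>\<tau>\<ge>-h. 0 \<le> w \<tau> \<and> w \<tau> \<le> \<eta> \<and> 0 \<le> v \<tau> \<and> v \<tau> \<le> \<eta>"
        proof (intro allI impI conjI)
          fix \<tau> :: real assume t: "-h \<le> \<tau>"
          show "0 \<le> w \<tau>" "0 \<le> v \<tau>" using nn t by auto
          show "w \<tau> \<le> \<eta>" using wlt[OF t] d by simp
          show "v \<tau> \<le> \<eta>"
          proof (cases "\<tau> \<le> 0")
            case True
            hence "\<tau> \<in> {-h..0}" using t by simp
            hence "v \<tau> = \<psi> \<tau>" "\<psi> \<tau> < d" using init B by auto
            thus ?thesis using d by linarith
          next
            case False thus ?thesis using vle by simp
          qed
        qed
        show "(\<forall>\<tau>\<ge>-h. 0 \<le> w \<tau> \<and> w \<tau> \<le> \<eta> \<and> 0 \<le> v \<tau> \<and> v \<tau> \<le> \<eta>) \<and> (\<forall>t\<ge>0. sup1 h (\<lambda>s. w (t+s)) \<le> d)" using G1 sw by blast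
      qed
    qed
    have C0: "\<forall>\<epsilon>>0. \<exists>\<delta>>0. \<forall>\<phi> \<psi> w v w' v'.
              Xplus h q j \<mu> \<phi> \<psi> \<and> is_sol h Rm q j \<mu> \<phi> \<psi> w v w' v' \<and> sup2 h \<phi> \<psi> < \<delta> \<longrightarrow>
              (\<forall>t\<ge>0. sup2 h (\<lambda>s. w (t + s)) (\<lambda>s. v (t + s)) < \<epsilon>)"
    proof (intro allI impI)
      fix e :: real assume e: "0 < e"
      obtain d where d: "d > 0" "d \<le> e/2" and dK: "\<forall>\<phi> \<psi> w v w' v'. Xplus h q j \<mu> \<phi> \<psi> \<and> is_sol h Rm q j \<mu> \<phi> \<psi> w v w' v' \<and>
        (\<forall>s\<in>{-h..0}. \<phi> s < d \<and> \<psi> s < d) \<longrightarrow>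
        (\<forall>\<tau>\<ge>-h. 0 \<le> w \<tau> \<and> w \<tau> \<le> e/2 \<and> 0 \<le> v \<tau> \<and> v \<tau> \<le> e/2) \<and>
        (\<forall>t\<ge>0. sup1 h (\<lambda>s. w (t+s)) \<le> d)"
        using Key[of "e/2"] e by auto
      show "\<exists>\<delta>>0. \<forall>\<phi> \<psi> w v w' v'.
              Xplus h q j \<mu> \<phi> \<psi> \<and> is_sol h Rm q j \<mu> \<phi> \<psi> w v w' v' \<and> sup2 h \<phi> \<psi> < \<delta> \<longrightarrow>
              (\<forall>t\<ge>0. sup2 h (\<lambda>s. w (t + s)) (\<lambda>s. v (t + s)) < e)"
      proof (intro exI[of _ d] conjI d allI impI)
        fix \<phi> \<psi> w v w' v' and t :: real
        assume A: "Xplus h q j \<mu> \<phi> \<psi> \<and> is_sol h Rm q j \<mu> \<phi> \<psi> w v w' v' \<and> sup2 h \<phi> \<psi> < d"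
          and t: "0 \<le> t"
        hence X: "Xplus h q j \<mu> \<phi> \<psi>" and S: "is_sol h Rm q j \<mu> \<phi> \<psi> w v w' v'"
          and sp: "sup2 h \<phi> \<psi> < d" by auto
        obtain \<phi>' \<psi>' where "Uplus h \<phi> \<psi> \<phi>' \<psi>'" using X unfolding Xplus_def by blast
        hence c: "continuous_on {-h..0} \<phi>" "continuous_on {-h..0} \<psi>"
          unfolding Uplus_def by (auto intro: segC1_cont)
        have "\<forall>s\<in>{-h..0}. \<phi> s < d \<and> \<psi> s < d"
          using cont_le_sup2[OF c] sp by (meson abs_ge_self le_less_trans)
        hence bnd: "\<forall>\<tau>\<ge>-h. 0 \<le> w \<tau> \<and> w \<tau> \<le> e/2 \<and> 0 \<le> v \<tau> \<and> v \<tau> \<le> e/2"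
          using dK X S by blast
        have "sup2 h (\<lambda>s. w (t + s)) (\<lambda>s. v (t + s)) \<le> e/2"
          using bnd t by (intro sup2_le[OF h0]) auto
        thus "sup2 h (\<lambda>s. w (t + s)) (\<lambda>s. v (t + s)) < e" using e by simp
      qed
    qed
    have C1: "\<forall>\<epsilon>>0. \<exists>\<delta>>0. \<forall>\<phi> \<psi> w v w' v'.
              Xplus h q j \<mu> \<phi> \<psi> \<and> is_sol h Rm q j \<mu> \<phi> \<psi> w v w' v' \<and>
              sup2 h w v + sup2 h w' v' < \<delta> \<longrightarrow>
              (\<forall>t\<ge>0. sup2 h (\<lambda>s. w (t + s)) (\<lambda>s. v (t + s))
                     + sup2 h (\<lambda>s. w' (t + s)) (\<lambda>s. v' (t + s)) < \<epsilon>)"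
    proof (intro allI impI)
      fix e :: real assume e: "0 < e"
      obtain K where K: "\<forall>z>Rm. \<bar>q z\<bar> \<le> K" using q_bdd by blast
      have "0 < e/8" using e by simp
      then obtain dj where dj: "dj > 0" "\<forall>\<phi> \<psi> \<phi>' \<psi>'. Uplus h \<phi> \<psi> \<phi>' \<psi>' \<and> sup1 h \<phi> \<le> dj \<longrightarrow> j \<phi> \<psi> \<le> e/8"
        using small by blast
      define m where "m = min (e/8) dj"
      have m: "0 < m" "m \<le> e/8" "m \<le> dj" unfolding m_def using e dj by auto
      define \<eta> where "\<eta> = m / (1 + \<bar>K\<bar> + \<mu>)"
      have pos: "0 < 1 + \<bar>K\<bar> + \<mu>" using mu_pos by simp
      have eq: "\<eta> * (1 + \<bar>K\<bar> + \<mu>) = m" unfolding \<eta>_def using pos by simp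
      have eta: "0 < \<eta>" unfolding \<eta>_def using m pos by simp
      have eta1: "\<eta> \<le> m" "\<bar>K\<bar> * \<eta> \<le> m" "\<mu> * \<eta> \<le> m"
      proof -
        have "\<eta> * 1 \<le> \<eta> * (1 + \<bar>K\<bar> + \<mu>)" using eta mu_pos by (intro mult_left_mono) auto
        moreover have "\<bar>K\<bar> * \<eta> \<le> (1 + \<bar>K\<bar> + \<mu>) * \<eta>" using eta mu_pos by (intro mult_right_mono) auto
        moreover have "\<mu> * \<eta> \<le> (1 + \<bar>K\<bar> + \<mu>) * \<eta>" using eta mu_pos by (intro mult_right_mono) auto
        ultimately show "\<eta> \<le> m" "\<bar>K\<bar> * \<eta> \<le> m" "\<mu> * \<eta> \<le> m" using eq by (simp_all add: mult.commute)
      qed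
      obtain d where d: "d > 0" "d \<le> \<eta>" and dK: "\<forall>\<phi> \<psi> w v w' v'. Xplus h q j \<mu> \<phi> \<psi> \<and> is_sol h Rm q j \<mu> \<phi> \<psi> w v w' v' \<and>
        (\<forall>s\<in>{-h..0}. \<phi> s < d \<and> \<psi> s < d) \<longrightarrow>
        (\<forall>\<tau>\<ge>-h. 0 \<le> w \<tau> \<and> w \<tau> \<le> \<eta> \<and> 0 \<le> v \<tau> \<and> v \<tau> \<le> \<eta>) \<and>
        (\<forall>t\<ge>0. sup1 h (\<lambda>s. w (t+s)) \<le> d)"
        using Key[OF eta] by auto
      show "\<exists>\<delta>>0. \<forall>\<phi> \<psi> w v w' v'.
              Xplus h q j \<mu> \<phi> \<psi> \<and> is_sol h Rm q j \<mu> \<phi> \<psi> w v w' v' \<and>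
              sup2 h w v + sup2 h w' v' < \<delta> \<longrightarrow>
              (\<forall>t\<ge>0. sup2 h (\<lambda>s. w (t + s)) (\<lambda>s. v (t + s))
                     + sup2 h (\<lambda>s. w' (t + s)) (\<lambda>s. v' (t + s)) < e)"
      proof (intro exI[of _ d] conjI d allI impI)
        fix \<phi> \<psi> w v w' v' and t :: real
        assume A: "Xplus h q j \<mu> \<phi> \<psi> \<and> is_sol h Rm q j \<mu> \<phi> \<psi> w v w' v' \<and> sup2 h w v + sup2 h w' v' < d"
          and t: "0 \<le> t"
        hence X: "Xplus h q j \<mu> \<phi> \<psi>" and S: "is_sol h Rm q j \<mu> \<phi> \<psi> w v w' v'"
          and sp: "sup2 h w v + sup2 h w' v' < d" by auto
        have nn: "\<forall>t\<ge>-h. 0 \<le> w t \<and> 0 \<le> v t" using nonneg[OF X S] .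
        have init: "\<forall>s\<in>{-h..0}. w s = \<phi> s \<and> v s = \<psi> s" using S unfolding is_sol_def by auto
        have cw: "continuous_on {-h..} w" "continuous_on {-h..} v"
          using S unfolding is_sol_def
          by (auto simp: continuous_on_eq_continuous_within intro: DERIV_continuous)
        hence cw0: "continuous_on {-h..0} w" "continuous_on {-h..0} v"
          by (auto intro: continuous_on_subset)
        have cd0: "continuous_on {-h..0} w'" "continuous_on {-h..0} v'"
          using S unfolding is_sol_def by (auto intro: continuous_on_subset)
        have z: "0 \<in> {-h..0}" using h0 by simp
        have "0 \<le> sup2 h w v" using cont_le_sup2(1)[OF cw0 z] by simp
        moreover have "0 \<le> sup2 h w' v'" using cont_le_sup2(1)[OF cd0 z] by simp
        ultimately have s1: "sup2 h w v < d" and s2: "sup2 h w' v' < d" using sp by auto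
        have "\<forall>s\<in>{-h..0}. \<phi> s < d \<and> \<psi> s < d"
          using cont_le_sup2[OF cw0] s1 init by (metis abs_ge_self le_less_trans)
        hence bnd: "\<forall>\<tau>\<ge>-h. 0 \<le> w \<tau> \<and> w \<tau> \<le> \<eta> \<and> 0 \<le> v \<tau> \<and> v \<tau> \<le> \<eta>"
          and sw: "\<forall>t\<ge>0. sup1 h (\<lambda>s. w (t+s)) \<le> d"
          using dK X S by blast+
        have a1: "sup2 h (\<lambda>s. w (t + s)) (\<lambda>s. v (t + s)) \<le> e/8"
        proof (rule sup2_le[OF h0])
          fix s :: real assume "s \<in> {-h..0}"
          hence "-h \<le> t + s" using t by simp
          hence "0 \<le> w (t+s) \<and> w (t+s) \<le> \<eta> \<and> 0 \<le> v (t+s) \<and> v (t+s) \<le> \<eta>" using bnd by blast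
          thus "\<bar>w (t + s)\<bar> \<le> e/8 \<and> \<bar>v (t + s)\<bar> \<le> e/8" using eta1 m by linarith
        qed
        have dbound: "\<bar>w' \<tau>\<bar> \<le> e/4 \<and> \<bar>v' \<tau>\<bar> \<le> e/4" if tau: "-h \<le> \<tau>" for \<tau>
        proof (cases "\<tau> < 0")
          case True
          hence "\<tau> \<in> {-h..0}" using tau by simp
          hence "\<bar>w' \<tau>\<bar> < d" "\<bar>v' \<tau>\<bar> < d" using cont_le_sup2[OF cd0] s2 by (meson le_less_trans)+
          thus ?thesis using d eta1 m e by auto
        next
          case False
          hence t0: "0 \<le> \<tau>" by simp
          have eqs: "w' \<tau> = q (v \<tau>) * w \<tau>" "v' \<tau> = j (\<lambda>s. w (\<tau>+s)) (\<lambda>s. v (\<tau>+s)) - \<mu> * v \<tau>"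
            using S t0 unfolding is_sol_def by auto
          have wb: "0 \<le> w \<tau>" "w \<tau> \<le> \<eta>" "0 \<le> v \<tau>" "v \<tau> \<le> \<eta>" using bnd tau by auto
          have "Rm < v \<tau>" using wb Rm_neg by linarith
          hence "\<bar>q (v \<tau>)\<bar> \<le> K" using K by blast
          hence qb: "\<bar>q (v \<tau>)\<bar> \<le> \<bar>K\<bar>" by linarith
          have "\<bar>w' \<tau>\<bar> = \<bar>q (v \<tau>)\<bar> * w \<tau>" using eqs wb by (simp add: abs_mult)
          also have "\<dots> \<le> \<bar>K\<bar> * \<eta>" using qb wb by (intro mult_mono) auto
          finally have w1: "\<bar>w' \<tau>\<bar> \<le> e/4" using eta1 m by simp
          have U: "Uplus h (\<lambda>s. w (\<tau>+s)) (\<lambda>s. v (\<tau>+s)) (\<lambda>s. w' (\<tau>+s)) (\<lambda>s. v' (\<tau>+s))"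
            using seg_Uplus[OF S nn t0] .
          have jn: "0 \<le> j (\<lambda>s. w (\<tau>+s)) (\<lambda>s. v (\<tau>+s))" using j_nonneg[OF U] .
          have "sup1 h (\<lambda>s. w (\<tau>+s)) \<le> d" using sw t0 by blast
          hence "sup1 h (\<lambda>s. w (\<tau>+s)) \<le> dj" using d eta1 m by linarith
          hence jb: "j (\<lambda>s. w (\<tau>+s)) (\<lambda>s. v (\<tau>+s)) \<le> e/8" using dj(2) U by blast
          have "\<mu> * v \<tau> \<le> \<mu> * \<eta>" using wb mu_pos by simp
          moreover have "0 \<le> \<mu> * v \<tau>" using wb mu_pos by simp
          ultimately have "\<bar>v' \<tau>\<bar> \<le> e/4" using eqs jn jb eta1 m by linarith
          thus ?thesis using w1 by simp
        qed
        have a2: "sup2 h (\<lambda>s. w' (t + s)) (\<lambda>s. v' (t + s)) \<le> e/4"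
          using dbound t by (intro sup2_le[OF h0]) auto
        show "sup2 h (\<lambda>s. w (t + s)) (\<lambda>s. v (t + s))
                     + sup2 h (\<lambda>s. w' (t + s)) (\<lambda>s. v' (t + s)) < e"
          using a1 a2 e by linarith
      qed
    qed
    show ?R using Z C0 C1 by blast
  qed
  show ?thesis using P1 P2 by blast
qed

end
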